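(* Let $n$ be a positive integer, $\pi\in\mathrm{NC}_B(n)$ and $\psi(\pi)=(\sigma,x)$. Write $i\sim_\pi j$ (resp. $i\sim_\sigma j$) if $i,j$ lie in the same block of $\pi$ (resp. $\sigma$), and $i\not\sim_\pi j$ otherwise. Let $i<j$ be positive integers in $[n]$ with $i\sim_\sigma j$. Then: (1) if $x=\emptyset$, then $i\sim_\pi j$ and $i\not\sim_\pi -j$; (2) if $x$ is an edge $(a,b)$ of $\sigma$, then $i\not\sim_\pi j$ and $i\sim_\pi -j$ when $i\le a<b\le j$, and $i\sim_\pi j$ and $i\not\sim_\pi -j$ otherwise; (3) if $x$ is a block $B$ of $\sigma$, then $i\sim_\pi j$ and $i\sim_\pi -j$ when $\{i,j\}\subseteq B$; $i\not\sim_\pi j$ and $i\sim_\pi -j$ when $\{i,j\}\not\subseteq B$ and $i<\min B\le\max B<j$; and $i\sim_\pi j$ and $i\not\sim_\pi -j$ otherwise.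
   Context: $[\pm n]=\{1,\dots,n,-1,\dots,-n\}$. A partition of type $B_n$ is a partition $\pi$ of $[\pm n]$ such that $-B$ is a block whenever $B$ is, with at most one block satisfying $B=-B$; it is noncrossing if, in the linear order $1<\cdots<n<-1<\cdots<-n$, there are no $a<b<c<d$ with $a,c$ in one block and $b,d$ in another. $\mathrm{NC}_B(n)$ is the set of these; $\mathrm{NC}(n)$ is the set of noncrossing partitions of $[n]$. An edge of $\sigma\in\mathrm{NC}(n)$ is a pair $(i,j)$, $i<j$, with $i,j$ in a common block containing no integer strictly between them. The map $\psi$: given $\pi\in\mathrm{NC}_B(n)$, let $\eta$ be obtained by deleting all negative integers from the blocks of $\pi$ (discarding empty sets), and let $X$ be the set of blocks $A$ of $\eta$ such that the block of $\pi$ containing $A$ also contains a negative integer. Write $X=\{A_1,\dots,A_m\}$ with $\max A_1<\cdots<\max A_m$. Let $\sigma$ be obtained from $\eta$ by merging $A_i$ and $A_{m+1-i}$ for $i=1,\dots,\lfloor m/2\rfloor$; $x=\emptyset$ if $m=0$, $x=(\max A_{m/2},\min A_{m/2+1})$ if $m>0$ is even, $x=A_{(m+1)/2}$ if $m$ is odd; $\psi(\pi)=(\sigma,x)$. *)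

theory Defs
  imports Main "HOL-Library.Disjoint_Sets"
begin

definition signed_set :: "nat \<Rightarrow> int set" where
  "signed_set n = {i. 1 \<le> \<bar>i\<bar> \<and> \<bar>i\<bar> \<le> int n}"

text \<open>Position in the linear order 1 < ... < n < -1 < ... < -n.\<close>
definition posB :: "nat \<Rightarrow> int \<Rightarrow> int" where
  "posB n i = (if i > 0 then i else int n - i)"

definition same_block :: "int set set \<Rightarrow> int \<Rightarrow> int \<Rightarrow> bool" where
  "same_block P i j \<longleftrightarrow> (\<exists>B\<in>P. i \<in> B \<and> j \<in> B)"

definition noncrossingB :: "nat \<Rightarrow> int set set \<Rightarrow> bool" where
  "noncrossingB n P \<longleftrightarrow>
     \<not> (\<exists>B1\<in>P. \<exists>B2\<in>P. B1 \<noteq> B2 \<and>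
          (\<exists>a b c d. a \<in> B1 \<and> c \<in> B1 \<and> b \<in> B2 \<and> d \<in> B2 \<and>
             posB n a < posB n b \<and> posB n b < posB n c \<and> posB n c < posB n d))"

definition NCB :: "nat \<Rightarrow> int set set set" where
  "NCB n = {P. partition_on (signed_set n) P \<and>
               (\<forall>B\<in>P. uminus ` B \<in> P) \<and>
               card {B\<in>P. uminus ` B = B} \<le> 1 \<and>
               noncrossingB n P}"

datatype xdata = XEmpty | XEdge int int | XBlock "int set"

definition etaB :: "nat \<Rightarrow> int set set \<Rightarrow> int set set" where
  "etaB n P = {B \<inter> {1..int n} | B. B \<in> P} - {{}}"

definition XB :: "nat \<Rightarrow> int set set \<Rightarrow> int set set" where
  "XB n P = {A \<in> etaB n P. \<exists>B\<in>P. A \<subseteq> B \<and> (\<exists>k\<in>B. k < 0)}"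

definition Ablk :: "nat \<Rightarrow> int set set \<Rightarrow> nat \<Rightarrow> int set" where
  "Ablk n P k = (THE A. A \<in> XB n P \<and>
                   Max A = sorted_list_of_set (Max ` XB n P) ! (k - 1))"

definition psi :: "nat \<Rightarrow> int set set \<Rightarrow> int set set \<times> xdata" where
  "psi n P = (let X = XB n P; m = card X; A = Ablk n P in
     ((etaB n P - X) \<union> {A k \<union> A (m + 1 - k) | k. 1 \<le> k \<and> k \<le> m},
      if m = 0 then XEmpty
      else if even m then XEdge (Max (A (m div 2))) (Min (A (m div 2 + 1)))
      else XBlock (A ((m + 1) div 2))))"

end

theory Submission
  imports Defs
begin


lemma dec_rev_up:
  fixes f :: "nat \<Rightarrow> nat"
  assumes "\<forall>k<m. f k < m" "\<forall>k l. k < l \<longrightarrow> l < m \<longrightarrow> f l < f k"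
  shows "k < m \<Longrightarrow> f k + k \<le> m - 1"
proof (induction k)
  case 0 then show ?case using assms by force
next
  case (Suc k)
  then have "f (Suc k) < f k" using assms(2) by auto
  with Suc show ?case by auto
qed

lemma dec_rev_low:
  fixes f :: "nat \<Rightarrow> nat"
  assumes "\<forall>k<m. f k < m" "\<forall>k l. k < l \<longrightarrow> l < m \<longrightarrow> f l < f k"
  shows "\<forall>k. m - 1 - k = d \<longrightarrow> k < m \<longrightarrow> m - 1 \<le> f k + k"
proof (induction d)
  case 0 then show ?case by auto
next
  case (Suc d)
  show ?case
  proof (intro allI impI)
    fix k assume k: "m - 1 - k = Suc d" "k < m"
    then have "Suc k < m" "m - 1 - Suc k = d" by auto
    with Suc have "m - 1 \<le> f (Suc k) + Suc k" by auto
    moreover have "f (Suc k) < f k" using assms(2) \<open>Suc k < m\<close> by auto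
    ultimately show "m - 1 \<le> f k + k" by auto
  qed
qed

lemma dec_rev:
  fixes f :: "nat \<Rightarrow> nat"
  assumes "\<forall>k<m. f k < m" "\<forall>k l. k < l \<longrightarrow> l < m \<longrightarrow> f l < f k" "k < m"
  shows "f k = m - 1 - k"
proof -
  have "f k + k \<le> m - 1" using dec_rev_up[OF assms(1,2) assms(3)] .
  moreover have "m - 1 \<le> f k + k" using dec_rev_low[OF assms(1,2), of "m - 1 - k"] assms(3) by blast
  ultimately show ?thesis by linarith
qed

locale ncb =
  fixes n :: nat and P :: "int set set"
  assumes inP: "P \<in> NCB n"
begin

lemma part: "partition_on (signed_set n) P" using inP by (simp add: NCB_def)

lemma negB: "B \<in> P \<Longrightarrow> uminus ` B \<in> P" using inP by (simp add: NCB_def)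

lemma disj: "B1 \<in> P \<Longrightarrow> B2 \<in> P \<Longrightarrow> x \<in> B1 \<Longrightarrow> x \<in> B2 \<Longrightarrow> B1 = B2"
  using part unfolding partition_on_def disjoint_def by blast

lemma elem: "B \<in> P \<Longrightarrow> x \<in> B \<Longrightarrow> x \<noteq> 0 \<and> \<bar>x\<bar> \<le> int n"
proof -
  assume "B \<in> P" "x \<in> B"
  then have "x \<in> signed_set n" using partition_onD1[OF part] by blast
  then show ?thesis unfolding signed_set_def by auto
qed

lemma nonempty: "B \<in> P \<Longrightarrow> B \<noteq> {}"
  using part unfolding partition_on_def by auto

lemma finite_signed: "finite (signed_set n)"
proof -
  have "signed_set n \<subseteq> {- int n..int n}" unfolding signed_set_def by auto
  then show ?thesis by (rule finite_subset) auto
qed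

lemma finP: "finite P"
proof -
  have "\<Union>P = signed_set n" by (rule partition_onD1[OF part, symmetric])
  then have "finite (\<Union>P)" using finite_signed by simp
  then show ?thesis by (rule finite_UnionD)
qed

lemma finB: "B \<in> P \<Longrightarrow> finite B"
proof -
  assume "B \<in> P"
  then have "B \<subseteq> signed_set n" using partition_onD1[OF part] by blast
  then show ?thesis using finite_signed finite_subset by blast
qed

lemma zero_uniq:
  assumes "B \<in> P" "uminus ` B = B" "B' \<in> P" "uminus ` B' = B'"
  shows "B = B'"
proof -
  have "card {B\<in>P. uminus ` B = B} \<le> 1" using inP by (simp add: NCB_def)
  moreover have "finite {B\<in>P. uminus ` B = B}" using finP by auto
  moreover have "B \<in> {B\<in>P. uminus ` B = B}" "B' \<in> {B\<in>P. uminus ` B = B}" using assms by auto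
  ultimately show ?thesis using card_le_Suc0_iff_eq[of "{B\<in>P. uminus ` B = B}"] by (simp only: One_nat_def)
qed

lemma nc:
  assumes "B1 \<in> P" "B2 \<in> P" "B1 \<noteq> B2" "a \<in> B1" "c \<in> B1" "b \<in> B2" "d \<in> B2"
    "posB n a < posB n b" "posB n b < posB n c" "posB n c < posB n d"
  shows False
proof -
  have "noncrossingB n P" using inP by (simp add: NCB_def)
  moreover have "\<exists>B1\<in>P. \<exists>B2\<in>P. B1 \<noteq> B2 \<and>
          (\<exists>a b c d. a \<in> B1 \<and> c \<in> B1 \<and> b \<in> B2 \<and> d \<in> B2 \<and>
             posB n a < posB n b \<and> posB n b < posB n c \<and> posB n c < posB n d)"
  proof (intro bexI)
    have w: "a \<in> B1 \<and> c \<in> B1 \<and> b \<in> B2 \<and> d \<in> B2 \<and>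
             posB n a < posB n b \<and> posB n b < posB n c \<and> posB n c < posB n d"
      using assms by simp
    show "B1 \<noteq> B2 \<and> (\<exists>a b c d. a \<in> B1 \<and> c \<in> B1 \<and> b \<in> B2 \<and> d \<in> B2 \<and>
             posB n a < posB n b \<and> posB n b < posB n c \<and> posB n c < posB n d)"
      by (rule conjI[OF assms(3)], intro exI, rule w)
  qed (rule assms(2), rule assms(1))
  ultimately show False unfolding noncrossingB_def by (rule notE)
qed

lemma neg_mem: "B \<in> P \<Longrightarrow> x \<in> B \<Longrightarrow> - x \<in> uminus ` B" by auto

lemma mem_neg: "(x::int) \<in> uminus ` B \<longleftrightarrow> - x \<in> B"
proof
  assume "x \<in> uminus ` B"
  then obtain y where "y \<in> B" "x = - y" by blast
  then show "- x \<in> B" by simp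
next
  assume "- x \<in> B"
  then have "- (- x) \<in> uminus ` B" by (rule imageI)
  then show "x \<in> uminus ` B" by simp
qed

lemma negneg: "uminus ` uminus ` (B::int set) = B" by (simp add: image_image)

end

context ncb begin

definition pos :: "int set \<Rightarrow> int set" where "pos C = C \<inter> {1..int n}"
definition M :: "int set set" where "M = {C\<in>P. (\<exists>k\<in>C. k>0) \<and> (\<exists>k\<in>C. k<0)}"
definition mp :: "int set \<Rightarrow> int" where "mp C = Max (pos C)"

lemma pos_mem: "C \<in> P \<Longrightarrow> x \<in> C \<Longrightarrow> x > 0 \<Longrightarrow> x \<in> pos C"
  using elem by (fastforce simp: pos_def)
lemma pos_memD: "x \<in> pos C \<Longrightarrow> x \<in> C \<and> x > 0" by (auto simp: pos_def)
lemma finpos: "C \<in> P \<Longrightarrow> finite (pos C)" using finB pos_def by auto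
lemma M_P: "C \<in> M \<Longrightarrow> C \<in> P" by (simp add: M_def)
lemma M_pos_ne: "C \<in> M \<Longrightarrow> pos C \<noteq> {}"
  using pos_mem unfolding M_def by blast
lemma mp_in: "C \<in> M \<Longrightarrow> mp C \<in> pos C"
  unfolding mp_def using M_pos_ne finpos M_P Max_in by blast
lemma mp_ge: "C \<in> M \<Longrightarrow> x \<in> pos C \<Longrightarrow> x \<le> mp C"
  unfolding mp_def using finpos M_P Max_ge by blast
lemma M_neg: "C \<in> M \<Longrightarrow> uminus ` C \<in> M"
proof -
  assume C: "C \<in> M"
  then obtain a b where "a \<in> C" "a > 0" "b \<in> C" "b < 0" "C \<in> P" unfolding M_def by auto
  then have "-a \<in> uminus ` C" "-b \<in> uminus ` C" "uminus ` C \<in> P" using negB by auto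
  moreover have "-a < 0" "-b > 0" using \<open>a>0\<close> \<open>b<0\<close> by auto
  ultimately show ?thesis unfolding M_def by blast
qed
lemma mp_inj: "C \<in> M \<Longrightarrow> C' \<in> M \<Longrightarrow> mp C = mp C' \<Longrightarrow> C = C'"
proof -
  assume a: "C \<in> M" "C' \<in> M" "mp C = mp C'"
  have "mp C \<in> C" using mp_in[OF a(1)] pos_memD by blast
  moreover have "mp C \<in> C'" using mp_in[OF a(2)] pos_memD a(3) by metis
  ultimately show "C = C'" using disj[OF M_P[OF a(1)] M_P[OF a(2)]] by blast
qed
lemma pos_inj: "C \<in> M \<Longrightarrow> C' \<in> M \<Longrightarrow> pos C = pos C' \<Longrightarrow> C = C'"
proof -
  assume a: "C \<in> M" "C' \<in> M" "pos C = pos C'"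
  then have "mp C = mp C'" by (simp add: mp_def)
  then show "C = C'" by (rule mp_inj[OF a(1,2)])
qed
lemma finM: "finite M" using finP unfolding M_def by auto

lemma XB_eq: "XB n P = pos ` M"
proof
  show "XB n P \<subseteq> pos ` M"
  proof
    fix A assume A: "A \<in> XB n P"
    have A1: "A \<in> etaB n P" and A2: "\<exists>B'\<in>P. A \<subseteq> B' \<and> (\<exists>k\<in>B'. k < 0)"
      using A unfolding XB_def by blast+
    from A1 obtain B where B: "B \<in> P" "A = B \<inter> {1..int n}" "A \<noteq> {}" unfolding etaB_def by blast
    from A2 obtain B' k where B': "B' \<in> P" "A \<subseteq> B'" "k \<in> B'" "k < 0" by blast
    from B(3) obtain x where x: "x \<in> A" by blast
    then have "x \<in> B" "x \<in> B'" "x > 0" using B B' by auto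
    then have "B = B'" using disj B(1) B'(1) by blast
    then have "B \<in> M" using B' \<open>x \<in> B\<close> \<open>x>0\<close> unfolding M_def by blast
    moreover have "A = pos B" using B(2) pos_def by simp
    ultimately show "A \<in> pos ` M" by blast
  qed
next
  show "pos ` M \<subseteq> XB n P"
  proof
    fix A assume "A \<in> pos ` M"
    then obtain C where C: "C \<in> M" "A = pos C" by blast
    then have ne: "A \<noteq> {}" using M_pos_ne by blast
    have CP: "C \<in> P" using C(1) M_P by blast
    have AC: "A = C \<inter> {1..int n}" using C(2) pos_def by simp
    have e: "A \<in> etaB n P" unfolding etaB_def using ne CP AC by blast
    have "\<exists>k\<in>C. k<0" using C(1) unfolding M_def by blast
    moreover have "A \<subseteq> C" using AC by blast
    ultimately show "A \<in> XB n P" unfolding XB_def using e CP by blast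
  qed
qed

lemma inj_pos: "inj_on pos M" unfolding inj_on_def using pos_inj by blast
lemma inj_mp: "inj_on mp M" unfolding inj_on_def using mp_inj by blast

lemma MaxX: "Max ` XB n P = mp ` M"
  unfolding XB_eq mp_def by (simp add: image_image)

lemma cardX: "card (XB n P) = card M"
  unfolding XB_eq using inj_pos card_image by blast

lemma rev:
  assumes C: "C \<in> M" and C': "C' \<in> M" and lt: "mp C < mp C'"
  shows "mp (uminus ` C') < mp (uminus ` C)"
proof (rule ccontr)
  assume "\<not> ?thesis"
  then have le: "mp (uminus ` C) \<le> mp (uminus ` C')" by auto
  define u where "u = mp C"
  define u' where "u' = mp C'"
  define v where "v = mp (uminus ` C)"
  define v' where "v' = mp (uminus ` C')"
  have u: "u \<in> C" "u > 0" using mp_in[OF C] pos_memD u_def by auto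
  have u': "u' \<in> C'" "u' > 0" "u' \<le> int n" using mp_in[OF C'] pos_memD u'_def pos_def by auto
  have "v \<in> pos (uminus ` C)" using mp_in[OF M_neg[OF C]] v_def by simp
  then have v: "-v \<in> C" "v > 0" using pos_memD mem_neg by blast+
  have "v' \<in> pos (uminus ` C')" using mp_in[OF M_neg[OF C']] v'_def by simp
  then have v': "-v' \<in> C'" "v' > 0" using pos_memD mem_neg by blast+
  have ne: "C \<noteq> C'" using lt by auto
  have "v \<noteq> v'"
  proof
    assume "v = v'"
    then have "-v \<in> C'" using v' by simp
    then have "C = C'" using disj[OF M_P[OF C] M_P[OF C'] v(1)] by simp
    with ne show False by simp
  qed
  then have "v < v'" using le v_def v'_def by auto
  have p: "posB n u = u" "posB n u' = u'" "posB n (-v) = int n + v" "posB n (-v') = int n + v'"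
    using u u' v v' by (simp_all add: posB_def)
  have "u < u'" using lt u_def u'_def by simp
  show False
    using nc[OF M_P[OF C] M_P[OF C'] ne u(1) v(1) u'(1) v'(1)] p \<open>u < u'\<close> u' v \<open>v < v'\<close>
    by linarith
qed

end

context ncb begin
definition L :: "int list" where "L = sorted_list_of_set (mp ` M)"

lemma finS: "finite (mp ` M)" using finM by auto
lemma setL: "set L = mp ` M" unfolding L_def using finS by simp
lemma lenL: "length L = card M"
  by (simp add: L_def card_image[OF inj_mp])
lemma sortedL: "sorted_wrt (<) L" unfolding L_def by simp
lemma L_less: "i < j \<Longrightarrow> j < card M \<Longrightarrow> L ! i < L ! j"
  using sorted_wrt_nth_less[OF sortedL, of i j] lenL by simp
lemma L_less_iff: "i < card M \<Longrightarrow> j < card M \<Longrightarrow> L ! i < L ! j \<longleftrightarrow> i < j"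
  using L_less[of i j] L_less[of j i] by (cases i j rule: linorder_cases) auto

definition blk :: "nat \<Rightarrow> int set" where "blk k = (THE C. C \<in> M \<and> mp C = L ! (k - 1))"

lemma blk: assumes "1 \<le> k" "k \<le> card M" shows "blk k \<in> M \<and> mp (blk k) = L ! (k - 1)"
proof -
  have "L ! (k - 1) \<in> set L" using assms lenL by auto
  then obtain C where C: "C \<in> M" "mp C = L ! (k - 1)" using setL by auto
  then have "\<exists>!C. C \<in> M \<and> mp C = L ! (k - 1)"
  proof (intro ex1I[of _ C])
    show "C \<in> M \<and> mp C = L ! (k - 1)" using C by blast
  next
    fix C' assume "C' \<in> M \<and> mp C' = L ! (k - 1)"
    then show "C' = C" using mp_inj[of C' C] C by simp
  qed
  then show ?thesis unfolding blk_def by (rule theI')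
qed

lemma Ablk_eq: assumes "1 \<le> k" "k \<le> card M" shows "Ablk n P k = pos (blk k)"
proof -
  have b: "blk k \<in> M" "mp (blk k) = L ! (k - 1)" using blk[OF assms] by auto
  have S: "sorted_list_of_set (Max ` XB n P) = L" using MaxX L_def by simp
  show ?thesis unfolding Ablk_def S
  proof (rule the_equality)
    show "pos (blk k) \<in> XB n P \<and> Max (pos (blk k)) = L ! (k - 1)"
      using b XB_eq mp_def by auto
  next
    fix A assume A: "A \<in> XB n P \<and> Max A = L ! (k - 1)"
    then obtain C where C: "C \<in> M" "A = pos C" using XB_eq by auto
    then have "mp C = L ! (k - 1)" using A mp_def by simp
    then have "C = blk k" using b C mp_inj by metis
    then show "A = pos (blk k)" using C by simp
  qed
qed

lemma blk_inj: "1 \<le> k \<Longrightarrow> k \<le> card M \<Longrightarrow> 1 \<le> k' \<Longrightarrow> k' \<le> card M \<Longrightarrow> blk k = blk k' \<Longrightarrow> k = k'"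
proof -
  assume a: "1 \<le> k" "k \<le> card M" "1 \<le> k'" "k' \<le> card M" "blk k = blk k'"
  then have "L ! (k - 1) = L ! (k' - 1)" using blk[OF a(1,2)] blk[OF a(3,4)] by simp
  moreover have "distinct L" using sortedL strict_sorted_iff by blast
  moreover have "k - 1 < length L" "k' - 1 < length L" using a lenL by auto
  ultimately have "k - 1 = k' - 1" using nth_eq_iff_index_eq by blast
  then show "k = k'" using a by auto
qed

lemma blk_surj: assumes "C \<in> M" shows "\<exists>k. 1 \<le> k \<and> k \<le> card M \<and> blk k = C"
proof -
  have "mp C \<in> set L" using setL assms by auto
  then obtain j where j: "j < card M" "L ! j = mp C" using lenL by (auto simp: in_set_conv_nth)
  then have "blk (j + 1) \<in> M" "mp (blk (j+1)) = mp C" using blk[of "j+1"] by auto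
  then have "blk (j+1) = C" using mp_inj assms by auto
  then show ?thesis using j by (intro exI[of _ "j+1"]) auto
qed

lemma blk_rev: assumes "1 \<le> k" "k \<le> card M" shows "blk (card M + 1 - k) = uminus ` blk k"
proof -
  define m where "m = card M"
  define f where "f k = (SOME j. j < m \<and> blk (j+1) = uminus ` blk (k+1))" for k
  have f: "f k < m \<and> blk (f k + 1) = uminus ` blk (k+1)" if "k < m" for k
  proof -
    have "uminus ` blk (k+1) \<in> M" using M_neg blk[of "k+1"] that m_def by auto
    then obtain k' where "1 \<le> k'" "k' \<le> m" "blk k' = uminus ` blk (k+1)" using blk_surj m_def by blast
    then have "\<exists>j. j < m \<and> blk (j+1) = uminus ` blk (k+1)" by (intro exI[of _ "k'-1"]) auto
    then show ?thesis unfolding f_def by (rule someI_ex)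
  qed
  have dec: "\<forall>k l. k < l \<longrightarrow> l < m \<longrightarrow> f l < f k"
  proof (intro allI impI)
    fix k l assume kl: "k < l" "l < m"
    have bk: "blk (k+1) \<in> M" "mp (blk (k+1)) = L ! k" using blk[of "k+1"] kl m_def by auto
    have bl: "blk (l+1) \<in> M" "mp (blk (l+1)) = L ! l" using blk[of "l+1"] kl m_def by auto
    have "L ! k < L ! l" using L_less kl m_def by auto
    then have "mp (uminus ` blk (l+1)) < mp (uminus ` blk (k+1))" using rev bk bl by auto
    moreover have "mp (uminus ` blk (l+1)) = L ! f l" "mp (uminus ` blk (k+1)) = L ! f k"
      using f[of l] f[of k] kl blk[of "f l + 1"] blk[of "f k + 1"] m_def by auto
    moreover have "f l < card M" "f k < card M" using f kl m_def by auto
    ultimately show "f l < f k" using L_less_iff[of "f l" "f k"] by simp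
  qed
  have "f (k - 1) = m - 1 - (k - 1)"
    using dec_rev[of m f "k - 1"] f dec assms m_def by auto
  then have "blk (m - 1 - (k - 1) + 1) = uminus ` blk k" using f[of "k-1"] assms m_def by auto
  moreover have "m - 1 - (k - 1) + 1 = m + 1 - k" using assms m_def by auto
  ultimately show ?thesis using m_def by auto
qed

end

context ncb begin

lemma posB_p: "x > 0 \<Longrightarrow> posB n x = x" by (simp add: posB_def)
lemma posB_n: "x > 0 \<Longrightarrow> posB n (- x) = int n + x" by (simp add: posB_def)

lemma sbI: "B \<in> P \<Longrightarrow> x \<in> B \<Longrightarrow> y \<in> B \<Longrightarrow> same_block P x y"
  unfolding same_block_def by blast

lemma sbE: assumes "same_block P x y" obtains B where "B \<in> P" "x \<in> B" "y \<in> B"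
  using assms unfolding same_block_def by blast

lemma pos_of: "C \<in> P \<Longrightarrow> x \<in> C \<Longrightarrow> x > 0 \<Longrightarrow> x \<in> pos C" by (rule pos_mem)

lemma le_n: "C \<in> P \<Longrightarrow> x \<in> C \<Longrightarrow> \<bar>x\<bar> \<le> int n" using elem by blast

lemma sigma_sb:
  assumes "psi n P = (\<sigma>, x)" "same_block \<sigma> i j" "i > 0" "j > 0"
  shows "same_block P i j \<or> same_block P i (- j)"
proof -
  define m where "m = card M"
  have \<sigma>: "\<sigma> = (etaB n P - XB n P) \<union> {Ablk n P k \<union> Ablk n P (m + 1 - k) | k. 1 \<le> k \<and> k \<le> m}"
    using assms(1) unfolding psi_def Let_def m_def cardX by simp
  obtain E where E: "E \<in> \<sigma>" "i \<in> E" "j \<in> E" using assms(2) unfolding same_block_def by blast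
  show ?thesis
  proof (cases "E \<in> etaB n P - XB n P")
    case True
    then obtain B where B: "B \<in> P" "E = B \<inter> {1..int n}" unfolding etaB_def by blast
    then show ?thesis using E sbI[of B i j] by blast
  next
    case False
    then obtain k where k: "1 \<le> k" "k \<le> m" "E = Ablk n P k \<union> Ablk n P (m + 1 - k)"
      using E(1) \<sigma> by blast
    define C where "C = blk k"
    have CM: "C \<in> M" using blk[of k] k m_def C_def by auto
    have CP: "C \<in> P" "uminus ` C \<in> P" using CM M_P negB by auto
    have "E = pos C \<union> pos (uminus ` C)"
      using k Ablk_eq[of k] Ablk_eq[of "m + 1 - k"] blk_rev[of k] m_def C_def by auto
    then have ij: "i \<in> C \<or> i \<in> uminus ` C" "j \<in> C \<or> j \<in> uminus ` C"
      using E pos_memD by blast+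
    show ?thesis
    proof (cases "i \<in> C")
      case iC: True
      show ?thesis
      proof (cases "j \<in> C")
        case True then show ?thesis using iC sbI[OF CP(1)] by blast
      next
        case False then have "- j \<in> C" using ij mem_neg by blast
        then show ?thesis using iC sbI[OF CP(1)] by blast
      qed
    next
      case iC: False
      then have iC': "i \<in> uminus ` C" using ij by blast
      show ?thesis
      proof (cases "j \<in> C")
        case True then have "- j \<in> uminus ` C" by (rule imageI)
        then show ?thesis using iC' sbI[OF CP(2)] by blast
      next
        case False then have "j \<in> uminus ` C" using ij by blast
        then show ?thesis using iC' sbI[OF CP(2)] by blast
      qed
    qed
  qed
qed

lemma both_zero:
  assumes "same_block P i j" "same_block P i (- j)"
  shows "\<exists>D\<in>P. i \<in> D \<and> j \<in> D \<and> - j \<in> D \<and> uminus ` D = D"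
proof -
  obtain B where B: "B \<in> P" "i \<in> B" "j \<in> B" using assms(1) by (rule sbE)
  obtain B' where B': "B' \<in> P" "i \<in> B'" "- j \<in> B'" using assms(2) by (rule sbE)
  have "B = B'" using disj B B' by blast
  then have mj: "- j \<in> B" using B' by simp
  have "- j \<in> uminus ` B" using B(3) by (rule imageI)
  then have "uminus ` B = B" using disj[OF negB[OF B(1)] B(1)] mj by blast
  then show ?thesis using B mj by blast
qed

lemma zero_M: assumes "D \<in> P" "uminus ` D = D" shows "D \<in> M"
proof -
  obtain y where y: "y \<in> D" using nonempty[OF assms(1)] by blast
  have "y \<noteq> 0" using elem assms(1) y by blast
  have "- y \<in> uminus ` D" using y by (rule imageI)
  then have my: "- y \<in> D" using assms(2) by simp
  show ?thesis
  proof (cases "y > 0")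
    case True
    then show ?thesis unfolding M_def using assms(1) y my
      by (intro CollectI conjI) (blast, rule bexI[of _ y], simp_all, rule bexI[of _ "-y"], simp_all)
  next
    case False
    then have "y < 0" using \<open>y \<noteq> 0\<close> by simp
    then show ?thesis unfolding M_def using assms(1) y my
      by (intro CollectI conjI) (blast, rule bexI[of _ "-y"], simp_all, rule bexI[of _ y], simp_all)
  qed
qed

lemma zero_odd: assumes "D \<in> P" "uminus ` D = D" shows "odd (card M)"
proof -
  have DM: "D \<in> M" using zero_M[OF assms] .
  obtain k where k: "1 \<le> k" "k \<le> card M" "blk k = D" using blk_surj[OF DM] by blast
  have "blk (card M + 1 - k) = blk k" using blk_rev[OF k(1,2)] k(3) assms(2) by simp
  then have "card M + 1 - k = k" using blk_inj[of "card M + 1 - k" k] k by simp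
  then show ?thesis by presburger
qed

end

context ncb begin

lemma even_case:
  assumes ev: "even (card M)" and m0: "card M \<noteq> 0"
    and ij: "1 \<le> i" "i < j" "j \<le> int n"
    and one: "same_block P i j \<or> same_block P i (- j)"
  defines "h \<equiv> card M div 2"
  defines "a \<equiv> Max (pos (blk h))" and "b \<equiv> Min (pos (uminus ` blk h))"
  shows "(if i \<le> a \<and> b \<le> j
             then \<not> same_block P i j \<and> same_block P i (- j)
             else same_block P i j \<and> \<not> same_block P i (- j))"
proof -
  define m where "m = card M"
  have h: "1 \<le> h" "h + 1 \<le> m" "m + 1 - h = h + 1" using ev m0 unfolding h_def m_def by auto
  define C1 where "C1 = blk h"
  have C1: "C1 \<in> M" "mp C1 = L ! (h - 1)" using blk[of h] h m_def C1_def by auto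
  have nC1: "uminus ` C1 = blk (h + 1)" using blk_rev[of h] h m_def C1_def by auto
  have nC1M: "uminus ` C1 \<in> M" "mp (uminus ` C1) = L ! h" using blk[of "h+1"] h m_def nC1 by auto
  have P1: "C1 \<in> P" "uminus ` C1 \<in> P" using C1 nC1M M_P by auto
  have ne: "C1 \<noteq> uminus ` C1" using blk_inj[of h "h+1"] h m_def nC1 C1_def by auto
  have aeq: "a = mp C1" unfolding a_def mp_def C1_def by simp
  have a: "a \<in> C1" "a > 0" "a \<le> int n" using mp_in[OF C1(1)] aeq pos_memD unfolding pos_def by auto
  have nepos: "pos (uminus ` C1) \<noteq> {}" using M_pos_ne[OF nC1M(1)] .
  have bin: "b \<in> pos (uminus ` C1)" unfolding b_def C1_def[symmetric]
    using Min_in[OF finpos[OF P1(2)] nepos] .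
  have b: "b \<in> uminus ` C1" "- b \<in> C1" "b > 0" "b \<le> int n"
    using bin pos_memD mem_neg unfolding pos_def by auto
  have bmin: "\<And>y. y \<in> pos (uminus ` C1) \<Longrightarrow> b \<le> y"
    unfolding b_def C1_def[symmetric] using Min_le[OF finpos[OF P1(2)]] by blast
  have amax: "\<And>y. y \<in> pos C1 \<Longrightarrow> y \<le> a" using mp_ge[OF C1(1)] aeq by simp
  have a_lt: "a < mp (uminus ` C1)" using C1(2) nC1M(2) L_less[of "h - 1" h] h m_def aeq by auto
  have ab: "a < b"
  proof (rule ccontr)
    assume "\<not> a < b"
    moreover have "a \<noteq> b" using disj[OF P1(1) P1(2) a(1)] b(1) ne by blast
    ultimately have ba: "b < a" by simp
    define w where "w = mp (uminus ` C1)"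
    have w: "w \<in> uminus ` C1" "w > 0" "w \<le> int n" using mp_in[OF nC1M(1)] pos_memD unfolding w_def pos_def by auto
    have "posB n b < posB n a" "posB n a < posB n w" "posB n w < posB n (- b)"
      using posB_p[OF b(3)] posB_p[OF a(2)] posB_p[OF w(2)] posB_n[OF b(3)] ba a_lt w_def w(3) b(3)
      by simp_all
    then show False
      using nc[OF P1(2) P1(1) ne[symmetric] b(1) w(1) a(1) b(2)] by blast
  qed
  have nobetween: "\<not> (a < mp C \<and> mp C < b)" if CM: "C \<in> M" for C
  proof
    assume *: "a < mp C \<and> mp C < b"
    obtain k where k: "1 \<le> k" "k \<le> m" "blk k = C" using blk_surj[OF CM] m_def by blast
    have "mp C = L ! (k - 1)" using blk[OF k(1)] k m_def by auto
    moreover have "b \<le> mp (uminus ` C1)" using mp_in[OF nC1M(1)] bmin by blast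
    ultimately have "L ! (h - 1) < L ! (k - 1)" "L ! (k - 1) < L ! h"
      using * aeq C1(2) nC1M(2) by auto
    then have "h - 1 < k - 1" "k - 1 < h" using L_less_iff h k m_def by auto
    then show False by auto
  qed
  have notboth: "\<not> (same_block P i j \<and> same_block P i (- j))"
  proof
    assume "same_block P i j \<and> same_block P i (- j)"
    then obtain D where "D \<in> P" "uminus ` D = D" using both_zero by blast
    then have "odd (card M)" by (rule zero_odd)
    with ev show False by simp
  qed
  have sb1: "\<not> (i \<le> a \<and> b \<le> j)" if sbij: "same_block P i j"
  proof
    assume iab: "i \<le> a \<and> b \<le> j"
    obtain C where C: "C \<in> P" "i \<in> C" "j \<in> C" using sbij by (rule sbE)
    show False
    proof (cases "C = C1")
      case True
      then have "j \<le> a" using amax pos_of C ij by auto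
      then show False using iab ab by simp
    next
      case F1: False
      show False
      proof (cases "C = uminus ` C1")
        case True
        then have "b \<le> i" using bmin pos_of C ij by auto
        then show False using iab ab by simp
      next
        case False
        have "i \<noteq> a" using disj[OF C(1) P1(1) C(2)] a(1) F1 by blast
        then show False
          using nc[OF C(1) P1(1) F1 C(2) C(3) a(1) b(2)] posB_p[of i] posB_p[of j] posB_p[OF a(2)]
            posB_n[OF b(3)] iab ab ij by simp
      qed
    qed
  qed
  have sb2: "i \<le> a \<and> b \<le> j" if sbij: "same_block P i (- j)"
  proof -
    obtain C where C: "C \<in> P" "i \<in> C" "- j \<in> C" using sbij by (rule sbE)
    have jC: "j \<in> uminus ` C" using C(3) mem_neg by simp
    show ?thesis
    proof (cases "C = C1")
      case True
      then show ?thesis using amax bmin pos_of[OF P1(1) _] pos_of[OF P1(2) _] C jC ij by auto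
    next
      case F1: False
      show ?thesis
      proof (cases "C = uminus ` C1")
        case True
        then have "b \<le> i" "j \<le> a" using bmin amax pos_of[OF P1(2)] pos_of[OF P1(1)] C jC ij negneg
          by auto
        then show ?thesis using ij ab by simp
      next
        case F2: False
        have ia: "i \<noteq> a" using disj[OF C(1) P1(1) C(2)] a(1) F1 by blast
        have jb: "j \<noteq> b" using disj[OF C(1) P1(1) C(3)] b(2) F1 by blast
        have p: "posB n i = i" "posB n (- j) = int n + j" "posB n a = a" "posB n (- b) = int n + b"
          using ij a b by (simp_all add: posB_def)
        have c1: "\<not> (i < a \<and> j < b)"
          using nc[OF C(1) P1(1) F1 C(2) C(3) a(1) b(2)] p a(3) b(3) ij by auto
        have c2: "\<not> (a < i \<and> b < j)"
          using nc[OF P1(1) C(1) F1[symmetric] a(1) b(2) C(2) C(3)] p a(3) b(3) ij by auto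
        have c3: "\<not> (a < i \<and> j < b)"
        proof
          assume aij: "a < i \<and> j < b"
          have CM: "C \<in> M" unfolding M_def using C ij by (intro CollectI conjI) (blast, rule bexI[of _ i], simp_all, rule bexI[of _ "-j"], simp_all)
          define c where "c = mp C"
          have c: "c \<in> C" "c > 0" "c \<le> int n" "i \<le> c" using mp_in[OF CM] pos_memD mp_ge[OF CM] pos_of[OF C(1) C(2)] ij
            unfolding c_def pos_def by auto
          have "c \<noteq> b" using disj[OF C(1) P1(2) c(1)] b(1) F2 by blast
          moreover have "\<not> b < c"
          proof
            assume bc: "b < c"
            have "posB n i < posB n b" "posB n b < posB n c" "posB n c < posB n (- a)"
              using p posB_p[OF c(2)] posB_p[OF b(3)] posB_n[OF a(2)] aij ab c(3) bc ij a(2) by simp_all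
            then show False using nc[OF C(1) P1(2) F2 C(2) c(1) b(1) imageI[OF a(1)]] by simp
          qed
          ultimately have "c < b" by simp
          then show False using nobetween[OF CM] c aij c_def by simp
        qed
        show ?thesis using c1 c2 c3 ia jb by linarith
      qed
    qed
  qed
  show ?thesis using sb1 sb2 one notboth by auto
qed

end

context ncb begin

lemma odd_case:
  assumes od: "odd (card M)"
    and ij: "1 \<le> i" "i < j" "j \<le> int n"
    and one: "same_block P i j \<or> same_block P i (- j)"
  defines "B \<equiv> pos (blk ((card M + 1) div 2))"
  shows "(if {i, j} \<subseteq> B
             then same_block P i j \<and> same_block P i (- j)
             else if i < Min B \<and> Max B < j
             then \<not> same_block P i j \<and> same_block P i (- j)
             else same_block P i j \<and> \<not> same_block P i (- j))"
proof -
  define m where "m = card M"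
  define k0 where "k0 = (m + 1) div 2"
  obtain t where t: "m = 2 * t + 1" using od m_def by (metis oddE)
  have k0: "1 \<le> k0" "k0 \<le> m" "m + 1 - k0 = k0" unfolding k0_def t by simp_all
  define Z where "Z = blk k0"
  have ZM: "Z \<in> M" using blk[of k0] k0 m_def Z_def by auto
  have ZP: "Z \<in> P" using ZM M_P by blast
  have Zs: "uminus ` Z = Z" using blk_rev[of k0] k0 m_def Z_def by auto
  have Bd: "B = pos Z" unfolding B_def Z_def k0_def m_def by simp
  have Bne: "B \<noteq> {}" using M_pos_ne[OF ZM] Bd by simp
  have Bfin: "finite B" using finpos[OF ZP] Bd by simp
  have Bmem: "z \<in> Z \<and> - z \<in> Z \<and> z > 0 \<and> z \<le> int n" if "z \<in> B" for z
  proof -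
    have "z \<in> Z" "z > 0" "z \<le> int n" using that Bd pos_memD unfolding pos_def by auto
    moreover have "- z \<in> Z" using imageI[OF \<open>z \<in> Z\<close>, of uminus] Zs by simp
    ultimately show ?thesis by blast
  qed
  show ?thesis
  proof (cases "{i, j} \<subseteq> B")
    case True
    then have "i \<in> Z" "j \<in> Z" "- j \<in> Z" using Bmem by auto
    then show ?thesis using True sbI[OF ZP] by auto
  next
    case notB: False
    have notboth: "\<not> (same_block P i j \<and> same_block P i (- j))"
    proof
      assume "same_block P i j \<and> same_block P i (- j)"
      then have "\<exists>D\<in>P. i \<in> D \<and> j \<in> D \<and> - j \<in> D \<and> uminus ` D = D"
        using both_zero by simp
      then obtain D where D: "D \<in> P" "i \<in> D" "j \<in> D" "uminus ` D = D" by blast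
      have "D = Z" using zero_uniq[OF D(1) D(4) ZP Zs] by simp
      then have "i \<in> Z" "j \<in> Z" using D by simp_all
      then have "i \<in> B" "j \<in> B" using ij Bd pos_of[OF ZP] by simp_all
      then show False using notB by simp
    qed
    show ?thesis
    proof (cases "i < Min B \<and> Max B < j")
      case True
      have "\<not> same_block P i j"
      proof
        assume "same_block P i j"
        then obtain C where C: "C \<in> P" "i \<in> C" "j \<in> C" by (rule sbE)
        have CZ: "C \<noteq> Z"
        proof
          assume "C = Z"
          then have "i \<in> B" "j \<in> B" using C ij Bd pos_of[OF ZP] by auto
          then show False using notB by simp
        qed
        define z where "z = Min B"
        have z: "z \<in> Z" "- z \<in> Z" "z > 0" "z \<le> int n" using Bmem Min_in[OF Bfin Bne] z_def by blast+
        have "z \<le> Max B" using Max_ge[OF Bfin Min_in[OF Bfin Bne]] z_def by simp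
        then have "posB n i < posB n z" "posB n z < posB n j" "posB n j < posB n (- z)"
          using True z ij z_def by (simp_all add: posB_def)
        then show False using nc[OF C(1) ZP CZ C(2) C(3) z(1) z(2)] by simp
      qed
      then show ?thesis using True notB one by simp
    next
      case False
      have "\<not> same_block P i (- j)"
      proof
        assume "same_block P i (- j)"
        then obtain C where C: "C \<in> P" "i \<in> C" "- j \<in> C" by (rule sbE)
        have CZ: "C \<noteq> Z"
        proof
          assume "C = Z"
          then have "- j \<in> Z" using C(3) by simp
          then have "j \<in> uminus ` Z" using mem_neg by simp
          then have "j \<in> Z" using Zs by simp
          then have "i \<in> B" "j \<in> B" using C \<open>C = Z\<close> ij Bd pos_of[OF ZP] by auto
          then show False using notB by simp
        qed
        have btw: "i < z \<and> z < j" if zB: "z \<in> B" for z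
        proof -
          have z: "z \<in> Z" "- z \<in> Z" "z > 0" "z \<le> int n" using Bmem zB by blast+
          have zi: "z \<noteq> i" using disj[OF C(1) ZP C(2)] z(1) CZ by blast
          have zj: "z \<noteq> j" using disj[OF C(1) ZP C(3)] z(2) CZ by blast
          have c1: "\<not> (i < z \<and> j < z)"
          proof
            assume h: "i < z \<and> j < z"
            have "posB n i < posB n z" "posB n z < posB n (- j)" "posB n (- j) < posB n (- z)"
              using h z ij by (simp_all add: posB_def)
            then show False using nc[OF C(1) ZP CZ C(2) C(3) z(1) z(2)] by simp
          qed
          have c2: "\<not> (z < i)"
          proof
            assume h: "z < i"
            have "posB n z < posB n i" "posB n i < posB n (- z)" "posB n (- z) < posB n (- j)"
              using h z ij by (simp_all add: posB_def)
            then show False using nc[OF ZP C(1) CZ[symmetric] z(1) z(2) C(2) C(3)] by simp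
          qed
          show ?thesis using c1 c2 zi zj by linarith
        qed
        have "i < Min B" "Max B < j" using btw Min_in[OF Bfin Bne] Max_in[OF Bfin Bne] by blast+
        then show False using False by simp
      qed
      then show ?thesis using False notB one by simp
    qed
  qed
qed

end

context ncb begin
lemma zero_case:
  assumes "card M = 0" "i > 0" "j > 0" "same_block P i j \<or> same_block P i (- j)"
  shows "same_block P i j \<and> \<not> same_block P i (- j)"
proof -
  have "M = {}" using assms(1) finM by simp
  have "\<not> same_block P i (- j)"
  proof
    assume "same_block P i (- j)"
    then obtain C where C: "C \<in> P" "i \<in> C" "- j \<in> C" by (rule sbE)
    have "C \<in> M" unfolding M_def using C assms
      by (intro CollectI conjI) (blast, rule bexI[of _ i], simp_all, rule bexI[of _ "-j"], simp_all)
    then show False using \<open>M = {}\<close> by simp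
  qed
  then show ?thesis using assms(4) by simp
qed

end

theorem lemma3p3:
  fixes n :: nat and \<pi> \<sigma> :: "int set set" and x :: xdata and i j :: int
  assumes "n \<ge> 1" and "\<pi> \<in> NCB n" and "psi n \<pi> = (\<sigma>, x)"
    and "1 \<le> i" and "i < j" and "j \<le> int n" and "same_block \<sigma> i j"
  shows "(x = XEmpty \<longrightarrow> same_block \<pi> i j \<and> \<not> same_block \<pi> i (- j))
       \<and> (\<forall>a b. x = XEdge a b \<longrightarrow>
            (if i \<le> a \<and> b \<le> j
             then \<not> same_block \<pi> i j \<and> same_block \<pi> i (- j)
             else same_block \<pi> i j \<and> \<not> same_block \<pi> i (- j)))
       \<and> (\<forall>B. x = XBlock B \<longrightarrow>
            (if {i, j} \<subseteq> B
             then same_block \<pi> i j \<and> same_block \<pi> i (- j)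
             else if i < Min B \<and> Max B < j
             then \<not> same_block \<pi> i j \<and> same_block \<pi> i (- j)
             else same_block \<pi> i j \<and> \<not> same_block \<pi> i (- j)))"
proof -
  interpret ncb n \<pi> by unfold_locales (rule assms(2))
  define m where "m = card M"
  have one: "same_block \<pi> i j \<or> same_block \<pi> i (- j)"
    using sigma_sb[OF assms(3) assms(7)] assms(4,5) by simp
  have xe: "x = (if m = 0 then XEmpty
      else if even m then XEdge (Max (Ablk n \<pi> (m div 2))) (Min (Ablk n \<pi> (m div 2 + 1)))
      else XBlock (Ablk n \<pi> ((m + 1) div 2)))"
    using assms(3) unfolding psi_def Let_def m_def cardX by simp
  show ?thesis
  proof (cases "m = 0")
    case True
    then show ?thesis using xe zero_case[of i j] one assms(4,5) m_def by simp
  next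
    case m0: False
    show ?thesis
    proof (cases "even m")
      case True
      define h where "h = m div 2"
      have h: "1 \<le> h" "h \<le> m" "h + 1 \<le> m" "m + 1 - h = h + 1" using True m0 h_def by auto
      have A1: "Ablk n \<pi> h = pos (blk h)" using Ablk_eq[of h] h m_def by simp
      have A2: "Ablk n \<pi> (h + 1) = pos (uminus ` blk h)"
        using Ablk_eq[of "h+1"] blk_rev[of h] h m_def by simp
      have "x = XEdge (Max (pos (blk h))) (Min (pos (uminus ` blk h)))"
        using xe True m0 A1 A2 h_def by simp
      then show ?thesis
        using even_case[of i j] True m0 assms(4,5,6) one m_def h_def by simp
    next
      case False
      have "x = XBlock (pos (blk ((m + 1) div 2)))"
        using xe False m0 Ablk_eq[of "(m + 1) div 2"] m_def by simp
      then show ?thesis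
        using odd_case[of i j] False assms(4,5,6) one m_def by simp
    qed
  qed
qed


end
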